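(* Let $f$ be a bounded analytic function in $\mathbb{C}_0$ and suppose there are constants $\gamma>0$ and $c>0$ such that $|f(\gamma+i \tau)| \geq c$ for every $\tau\in\mathbb{R}$. Then for every $\tau\in\mathbb{R}$, \[\sum_{\substack{s \in \mathscr{Z}_f \\ \tau \leq \mathrm{Im}\, s \leq \tau+1 \\ 0 < \mathrm{Re}\, s < \gamma}} \mathrm{Re}\, s \leq \frac{4\gamma^2+1}{2\gamma} \log{\frac{\|f\|_\infty}{c}}\] and \[\int_\tau^{\tau+1} \big|\log|f(it)|\big|\,dt \leq \big|\log{\|f\|_\infty}\big| + \frac{\pi}{2} \frac{4\gamma^2+1}{2\gamma} \log{\frac{\|f\|_\infty}{c}},\] where $f(it)$ denotes the a.e.-defined nontangential boundary values of $f$.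
   Context: $\mathbb{C}_0=\{s:\mathrm{Re}\,s>0\}$, $\|f\|_\infty=\sup_{s\in\mathbb{C}_0}|f(s)|$, and $\mathscr{Z}_f$ is the zero sequence of $f$, zeros repeated according to multiplicity. *)

theory Defs
  imports "HOL-Complex_Analysis.Complex_Analysis"
begin

definition rhp :: "complex set" where
  "rhp = {s. 0 < Re s}"

definition sup_norm_rhp :: "(complex \<Rightarrow> complex) \<Rightarrow> real" where
  "sup_norm_rhp f = (SUP s\<in>rhp. cmod (f s))"

definition nontangential_limit :: "(complex \<Rightarrow> complex) \<Rightarrow> real \<Rightarrow> complex \<Rightarrow> bool" where
  "nontangential_limit f t L \<longleftrightarrow>
     (\<forall>a>0. (f \<longlongrightarrow> L) (at (\<i> * of_real t) within {z. 0 < Re z \<and> \<bar>Im z - t\<bar> < a * Re z}))"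

definition zero_mult :: "(complex \<Rightarrow> complex) \<Rightarrow> complex \<Rightarrow> nat" where
  "zero_mult f s = nat (zorder f s)"

end

theory Submission
  imports Defs
begin


lemma has_integral_cancel_const:
  fixes c :: complex
  assumes "c \<noteq> 0" "((\<lambda>x. c * f x) has_integral c * y) S"
  shows "(f has_integral y) S"
proof -
  have "((\<lambda>x. inverse c * (c * f x)) has_integral inverse c * (c * y)) S"
    by (rule has_integral_mult_right[OF assms(2)])
  thus ?thesis using assms(1) by (simp add: mult.assoc[symmetric])
qed

lemma mean_value_circle0:
  fixes \<phi> :: "complex \<Rightarrow> complex"
  assumes holo: "\<phi> holomorphic_on cball 0 r" and r: "r > 0"
  shows "((\<lambda>x. \<phi> (of_real r * exp (2 * of_real pi * \<i> * of_real x))) has_integral \<phi> 0) {0..1}"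
proof -
  have "((\<lambda>u. \<phi> u / (u - 0)) has_contour_integral (2 * of_real pi * \<i> * \<phi> 0)) (circlepath 0 r)"
    by (rule Cauchy_integral_circlepath_simple[OF holo]) (use r in simp)
  hence h: "((\<lambda>x. \<phi> (circlepath 0 r x) / circlepath 0 r x * vector_derivative (circlepath 0 r) (at x within {0..1}))
      has_integral (2 * of_real pi * \<i> * \<phi> 0)) {0..1}"
    by (simp add: has_contour_integral_def)
  have eq: "\<phi> (circlepath 0 r x) / circlepath 0 r x * vector_derivative (circlepath 0 r) (at x within {0..1})
       = (2 * of_real pi * \<i>) * \<phi> (of_real r * exp (2 * of_real pi * \<i> * of_real x))" if "x \<in> {0..1}" for x
  proof -
    have vd: "vector_derivative (circlepath 0 r) (at x within {0..1}) = 2 * pi * \<i> * r * exp(2 * of_real pi * \<i> * x)"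
      using that by (simp add: vector_derivative_circlepath01)
    show ?thesis unfolding vd using r by (simp add: circlepath field_simps)
  qed
  have "((\<lambda>x. (2 * of_real pi * \<i>) * \<phi> (of_real r * exp (2 * of_real pi * \<i> * of_real x))) has_integral (2 * of_real pi * \<i> * \<phi> 0)) {0..1}"
    by (rule has_integral_eq[OF _ h]) (rule eq)
  thus ?thesis by (rule has_integral_cancel_const[rotated]) simp
qed

definition ec :: "real \<Rightarrow> complex" where "ec x = exp (2 * of_real pi * \<i> * of_real x)"

lemma norm_ec [simp]: "cmod (ec x) = 1"
  unfolding ec_def by (simp add: norm_exp_eq_Re)

lemma cnj_ec_mult: "cnj (ec x) * ec x = 1"
proof -
  have "cnj (ec x) * ec x = ec x * cnj (ec x)" by (rule mult.commute)
  also have "\<dots> = of_real ((cmod (ec x))\<^sup>2)" by (rule complex_norm_square[symmetric])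
  finally show ?thesis by simp
qed

lemma mean_value_circle:
  fixes \<phi> :: "complex \<Rightarrow> complex"
  assumes holo: "\<phi> holomorphic_on cball 0 r" and r: "r > 0"
  shows "((\<lambda>x. \<phi> (of_real r * ec x)) has_integral \<phi> 0) {0..1}"
  using mean_value_circle0[OF assms] by (simp add: ec_def)

lemma log_mean_linear:
  assumes r: "0 < r" and b: "cmod b < r"
  shows "((\<lambda>x. ln (cmod (of_real r * ec x - b))) has_integral ln r) {0..1}"
proof -
  define z where "z = cnj b / of_real r"
  have z: "cmod z < 1" using r b by (simp add: z_def norm_divide)
  have nz: "Re (1 - z * w) > 0" if "cmod w \<le> 1" for w
  proof -
    have "\<bar>Re (z * w)\<bar> \<le> cmod (z * w)" by (rule abs_Re_le_cmod)
    also have "\<dots> \<le> cmod z" unfolding norm_mult using that by (intro mult_left_le) auto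
    finally show ?thesis using z by simp
  qed
  have holo: "(\<lambda>w. Ln (1 - z * w)) holomorphic_on cball 0 1"
  proof (intro holomorphic_intros)
    fix w :: complex assume "w \<in> cball 0 1"
    hence "Re (1 - z * w) > 0" using nz by simp
    thus "1 - z * w \<notin> \<real>\<^sub>\<le>\<^sub>0" by (auto simp: complex_nonpos_Reals_iff)
  qed
  have "((\<lambda>x. Ln (1 - z * (of_real 1 * ec x))) has_integral Ln (1 - z * 0)) {0..1}"
    using mean_value_circle[OF holo] by simp
  hence "((\<lambda>x. Re (Ln (1 - z * ec x))) has_integral 0) {0..1}"
    using has_integral_Re[of "\<lambda>x. Ln (1 - z * (of_real 1 * ec x))" "Ln (1 - z * 0)" "{0..1}"] by simp
  moreover have "Re (Ln (1 - z * ec x)) = ln (cmod (1 - z * ec x))" for x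
  proof -
    have "Re (1 - z * ec x) > 0" using nz by simp
    hence "1 - z * ec x \<noteq> 0" by (metis less_irrefl zero_complex.sel(1))
    thus ?thesis by simp
  qed
  ultimately have h1: "((\<lambda>x. ln (cmod (1 - z * ec x))) has_integral 0) {0..1}" by simp
  have h2: "((\<lambda>x. ln r) has_integral ln r) {0..1::real}"
    using has_integral_const_real[of "ln r" 0 1] by simp
  have eq: "ln (cmod (of_real r * ec x - b)) = ln r + ln (cmod (1 - z * ec x))" for x
  proof -
    have "cmod (of_real r * ec x - b) = cmod (cnj (of_real r * ec x - b))" by (rule complex_mod_cnj[symmetric])
    also have "cnj (of_real r * ec x - b) = cnj (ec x) * (of_real r * (1 - z * ec x))"
    proof -
      have "cnj (ec x) * (of_real r * (1 - z * ec x)) = of_real r * cnj (ec x) - of_real r * z * (cnj (ec x) * ec x)"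
        by (simp add: algebra_simps)
      also have "\<dots> = of_real r * cnj (ec x) - cnj b" using r by (simp add: cnj_ec_mult z_def)
      finally show ?thesis by simp
    qed
    also have "cmod \<dots> = r * cmod (1 - z * ec x)" using r by (simp add: norm_mult)
    finally have "cmod (of_real r * ec x - b) = r * cmod (1 - z * ec x)" .
    moreover have "cmod (1 - z * ec x) > 0"
    proof -
      have "Re (1 - z * ec x) > 0" using nz by simp
      hence "1 - z * ec x \<noteq> 0" by (metis less_irrefl zero_complex.sel(1))
      thus ?thesis by simp
    qed
    ultimately show ?thesis using r by (simp add: ln_mult)
  qed
  show ?thesis using has_integral_add[OF h2 h1] by (simp add: eq)
qed


lemma zeros_finite:
  fixes G :: "complex \<Rightarrow> complex"
  assumes holo: "G holomorphic_on ball 0 1" and G0: "G 0 \<noteq> 0" and \<rho>: "\<rho> < 1"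
  shows "finite {w\<in>cball 0 \<rho>. G w = 0}"
proof (cases "G constant_on ball 0 1")
  case True
  then obtain c where c: "\<And>w. w \<in> ball 0 1 \<Longrightarrow> G w = c" by (auto simp: constant_on_def)
  have "c = G 0" using c[of 0] by simp
  hence e: "{w\<in>cball 0 \<rho>. G w = 0} = {}" using c G0 \<rho> by auto
  show ?thesis unfolding e by (rule finite.emptyI)
next
  case False
  show ?thesis
    by (rule holomorphic_compact_finite_zeros[OF holo _ _ _ _ False]) (use \<rho> in auto)
qed

lemma zorder_linear_power:
  fixes b z :: complex
  shows "zorder (\<lambda>w. (w - b) ^ m) z = (if z = b then int m else 0)"
proof (cases "z = b")
  case True
  have "zorder (\<lambda>w. (w - b) ^ m) z = int m"
    by (rule zorder_eqI[where S = UNIV and g = "\<lambda>_. 1"]) (use True in \<open>auto simp: power_int_of_nat\<close>)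
  thus ?thesis using True by simp
next
  case False
  have "zorder (\<lambda>w. (w - b) ^ m) z = 0"
    by (rule zorder_eq_0I) (use False in \<open>auto intro!: analytic_intros\<close>)
  thus ?thesis using False by simp
qed

lemma zorder_poly_prod:
  fixes Z :: "complex set"
  assumes "finite Z"
  shows "zorder (\<lambda>w. \<Prod>b\<in>Z. (w - b) ^ n b) z = (if z \<in> Z then int (n z) else 0)"
proof -
  have ev: "eventually (\<lambda>w. w \<notin> Z) (at z)"
    using islimpt_finite[OF assms] islimpt_iff_eventually by blast
  have "zorder (\<lambda>w. \<Prod>b\<in>Z. (w - b) ^ n b) z = (\<Sum>b\<in>Z. zorder (\<lambda>w. (w - b) ^ n b) z)"
    by (rule zorder_prod_analytic) (auto intro!: analytic_intros eventually_mono[OF ev] simp: assms)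
  also have "\<dots> = (\<Sum>b\<in>Z. if z = b then int (n b) else 0)"
    by (simp add: zorder_linear_power)
  also have "\<dots> = (if z \<in> Z then int (n z) else 0)"
    using assms by (simp add: sum.delta)
  finally show ?thesis .
qed

lemma ln_norm_prod_pow:
  fixes w :: complex
  assumes "finite Z" "\<And>b. b \<in> Z \<Longrightarrow> w \<noteq> b"
  shows "ln (cmod (\<Prod>b\<in>Z. (w - b) ^ n b)) = (\<Sum>b\<in>Z. real (n b) * ln (cmod (w - b)))"
proof -
  have "cmod (\<Prod>b\<in>Z. (w - b) ^ n b) = (\<Prod>b\<in>Z. cmod (w - b) ^ n b)"
    by (simp add: prod_norm[symmetric] norm_power)
  also have "ln \<dots> = (\<Sum>b\<in>Z. ln (cmod (w - b) ^ n b))"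
    by (rule ln_prod) (use assms in auto)
  also have "\<dots> = (\<Sum>b\<in>Z. real (n b) * ln (cmod (w - b)))"
    by (simp add: ln_realpow)
  finally show ?thesis .
qed

lemma jensen:
  fixes G :: "complex \<Rightarrow> complex"
  assumes holo: "G holomorphic_on ball 0 1" and G0: "G 0 \<noteq> 0" and r: "0 < r" "r < 1"
    and circ: "\<And>w. cmod w = r \<Longrightarrow> G w \<noteq> 0"
  shows "finite {w\<in>ball 0 r. G w = 0}"
    and "((\<lambda>x. ln (cmod (G (of_real r * ec x)))) has_integral
          (ln (cmod (G 0)) + (\<Sum>b\<in>{w\<in>ball 0 r. G w = 0}. real (nat (zorder G b)) * ln (r / cmod b)))) {0..1}"
proof -
  define Z where "Z = {w\<in>ball 0 r. G w = 0}"
  define \<rho> where "\<rho> = (1 + r) / 2"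
  have \<rho>: "r < \<rho>" "\<rho> < 1" using r by (auto simp: \<rho>_def)
  have fin\<rho>: "finite {w\<in>cball 0 \<rho>. G w = 0}"
    by (rule zeros_finite[OF holo G0 \<rho>(2)])
  have finZ: "finite Z"
    by (rule finite_subset[OF _ fin\<rho>]) (use \<rho> in \<open>auto simp: Z_def\<close>)
  thus "finite {w\<in>ball 0 r. G w = 0}" by (simp add: Z_def)
  obtain r2 where r2: "r < r2" "r2 < 1" "\<And>w. cmod w < r2 \<Longrightarrow> G w = 0 \<Longrightarrow> cmod w < r"
  proof -
    define R where "R = cmod ` {w\<in>cball 0 \<rho>. G w = 0 \<and> cmod w > r}"
    have finR: "finite R" unfolding R_def by (rule finite_imageI, rule finite_subset[OF _ fin\<rho>]) auto
    define r2 where "r2 = Min (insert \<rho> R)"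
    have "r < r2" unfolding r2_def using finR \<rho> by (auto simp: R_def Min_gr_iff)
    moreover have "r2 \<le> \<rho>" unfolding r2_def using finR by simp
    moreover have "cmod w < r" if "cmod w < r2" "G w = 0" for w
    proof (rule ccontr)
      assume "\<not> cmod w < r"
      moreover have "cmod w \<noteq> r" using circ that by auto
      ultimately have "cmod w > r" by simp
      moreover have "cmod w \<le> \<rho>" using that \<open>r2 \<le> \<rho>\<close> by simp
      ultimately have "cmod w \<in> R" using that by (auto simp: R_def)
      hence "r2 \<le> cmod w" unfolding r2_def using finR by simp
      thus False using that by simp
    qed
    ultimately show ?thesis using that \<rho> by auto
  qed
  define A where "A = ball (0::complex) r2"
  have A: "open A" "connected A" "convex A" "0 \<in> A" by (auto simp: A_def r2 r intro!: convex_connected less_trans[OF r(1) r2(1)])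
  have holoA: "G holomorphic_on A" by (rule holomorphic_on_subset[OF holo]) (use r2 in \<open>auto simp: A_def\<close>)
  define n where "n b = nat (zorder G b)" for b
  define P where "P = (\<lambda>w. \<Prod>b\<in>Z. (w - b) ^ n b)"
  have zG: "if G z = 0 then zorder G z > 0 else zorder G z = 0" if "z \<in> A" for z
    using zorder_exist_zero[OF holoA A(1,2) that] G0 A(4) by blast
  have ZA: "G z = 0 \<longleftrightarrow> z \<in> Z" if "z \<in> A" for z
    using r2(3)[of z] that by (auto simp: Z_def A_def)
  have Pz: "P z = 0 \<longleftrightarrow> G z = 0" if "z \<in> A" for z
  proof -
    have "P z = 0 \<longleftrightarrow> (\<exists>b\<in>Z. (z - b) ^ n b = 0)" unfolding P_def using finZ by simp
    also have "\<dots> \<longleftrightarrow> (\<exists>b\<in>Z. z = b \<and> n b \<noteq> 0)" by auto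
    also have "\<dots> \<longleftrightarrow> z \<in> Z"
    proof
      assume "z \<in> Z"
      hence "G z = 0" by (simp add: Z_def)
      hence "zorder G z > 0" using zG[OF that] by simp
      thus "\<exists>b\<in>Z. z = b \<and> n b \<noteq> 0" using \<open>z \<in> Z\<close> by (auto simp: n_def)
    qed auto
    finally show ?thesis using ZA[OF that] by simp
  qed
  have zP: "zorder P z = zorder G z" if "z \<in> A" for z
  proof -
    have "zorder P z = (if z \<in> Z then int (n z) else 0)"
      unfolding P_def by (rule zorder_poly_prod[OF finZ])
    also have "\<dots> = zorder G z"
      using zG[OF that] ZA[OF that] by (auto simp: n_def)
    finally show ?thesis .
  qed
  have holoP: "P holomorphic_on A" unfolding P_def by (intro holomorphic_intros)
  obtain h where h: "h holomorphic_on A" "\<And>z. z \<in> A \<Longrightarrow> h z \<noteq> 0" "\<And>z. z \<in> A \<Longrightarrow> G z = h z * P z"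
    by (rule holomorphic_zorder_factorization[OF holoA A(1,2) holoP Pz zP]) auto
  obtain L where L: "L holomorphic_on A" "\<And>x. x \<in> A \<Longrightarrow> exp (L x) = h x"
    by (rule holomorphic_logarithm_exists[OF A(3,1) h(1) h(2) A(4)]) auto
  have cA: "cball 0 r \<subseteq> A" using r2 by (auto simp: A_def)
  have circA: "of_real r * ec x \<in> A" for x using r r2 by (auto simp: A_def norm_mult)
  have "((\<lambda>x. L (of_real r * ec x)) has_integral L 0) {0..1}"
    by (rule mean_value_circle[OF holomorphic_on_subset[OF L(1) cA] r(1)])
  hence "((\<lambda>x. Re (L (of_real r * ec x))) has_integral Re (L 0)) {0..1}"
    by (rule has_integral_Re)
  moreover have ReL: "Re (L w) = ln (cmod (h w))" if "w \<in> A" for w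
    using L(2)[OF that, symmetric] by (simp add: norm_exp_eq_Re)
  ultimately have hL: "((\<lambda>x. ln (cmod (h (of_real r * ec x)))) has_integral ln (cmod (h 0))) {0..1}"
    using circA A(4) by simp
  have Zr: "cmod b < r" if "b \<in> Z" for b using that by (auto simp: Z_def)
  have hb: "((\<lambda>x. \<Sum>b\<in>Z. real (n b) * ln (cmod (of_real r * ec x - b))) has_integral (\<Sum>b\<in>Z. real (n b) * ln r)) {0..1}"
    by (intro has_integral_sum finZ has_integral_mult_right log_mean_linear r(1) Zr)
  have tot: "((\<lambda>x. ln (cmod (h (of_real r * ec x))) + (\<Sum>b\<in>Z. real (n b) * ln (cmod (of_real r * ec x - b))))
     has_integral (ln (cmod (h 0)) + (\<Sum>b\<in>Z. real (n b) * ln r))) {0..1}"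
    by (rule has_integral_add[OF hL hb])
  have pw: "ln (cmod (G (of_real r * ec x))) = ln (cmod (h (of_real r * ec x))) + (\<Sum>b\<in>Z. real (n b) * ln (cmod (of_real r * ec x - b)))" for x
  proof -
    have ne: "of_real r * ec x \<noteq> b" if "b \<in> Z" for b
      using Zr[OF that] r by (auto simp: norm_mult)
    have "cmod (G (of_real r * ec x)) = cmod (h (of_real r * ec x)) * cmod (P (of_real r * ec x))"
      using h(3)[OF circA] by (simp add: norm_mult)
    moreover have "cmod (h (of_real r * ec x)) > 0" using h(2)[OF circA] by simp
    moreover have "cmod (P (of_real r * ec x)) > 0"
      using Pz[OF circA] circ[of "of_real r * ec x"] r by (auto simp: norm_mult)
    ultimately have "ln (cmod (G (of_real r * ec x))) = ln (cmod (h (of_real r * ec x))) + ln (cmod (P (of_real r * ec x)))"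
      by (simp add: ln_mult)
    also have "ln (cmod (P (of_real r * ec x))) = (\<Sum>b\<in>Z. real (n b) * ln (cmod (of_real r * ec x - b)))"
      unfolding P_def by (rule ln_norm_prod_pow[OF finZ ne])
    finally show ?thesis .
  qed
  have val: "ln (cmod (h 0)) + (\<Sum>b\<in>Z. real (n b) * ln r) = ln (cmod (G 0)) + (\<Sum>b\<in>Z. real (n b) * ln (r / cmod b))"
  proof -
    have ne: "0 \<noteq> b" if "b \<in> Z" for b using that G0 by (auto simp: Z_def)
    have bpos: "cmod b > 0" if "b \<in> Z" for b using ne[OF that] by simp
    have "cmod (G 0) = cmod (h 0) * cmod (P 0)" using h(3)[OF A(4)] by (simp add: norm_mult)
    moreover have "cmod (h 0) > 0" using h(2)[OF A(4)] by simp
    moreover have "cmod (P 0) > 0" using Pz[OF A(4)] G0 by simp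
    ultimately have "ln (cmod (G 0)) = ln (cmod (h 0)) + ln (cmod (P 0))" by (simp add: ln_mult)
    also have "ln (cmod (P 0)) = (\<Sum>b\<in>Z. real (n b) * ln (cmod (0 - b)))"
      unfolding P_def by (rule ln_norm_prod_pow[OF finZ ne])
    finally have "ln (cmod (G 0)) = ln (cmod (h 0)) + (\<Sum>b\<in>Z. real (n b) * ln (cmod b))" by simp
    moreover have "(\<Sum>b\<in>Z. real (n b) * ln (r / cmod b)) = (\<Sum>b\<in>Z. real (n b) * ln r) - (\<Sum>b\<in>Z. real (n b) * ln (cmod b))"
    proof -
      have "(\<Sum>b\<in>Z. real (n b) * ln (r / cmod b)) = (\<Sum>b\<in>Z. real (n b) * ln r - real (n b) * ln (cmod b))"
      proof (rule sum.cong[OF refl])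
        fix b assume "b \<in> Z"
        have "ln (r / cmod b) = ln r - ln (cmod b)" using r(1) bpos[OF \<open>b \<in> Z\<close>] by (simp add: ln_div)
        thus "real (n b) * ln (r / cmod b) = real (n b) * ln r - real (n b) * ln (cmod b)"
          by (simp add: right_diff_distrib)
      qed
      thus ?thesis by (simp add: sum_subtractf)
    qed
    ultimately show ?thesis by simp
  qed
  show "((\<lambda>x. ln (cmod (G (of_real r * ec x)))) has_integral
          (ln (cmod (G 0)) + (\<Sum>b\<in>{w\<in>ball 0 r. G w = 0}. real (nat (zorder G b)) * ln (r / cmod b)))) {0..1}"
    using tot unfolding pw[symmetric] val by (simp add: Z_def n_def)
qed


definition psi :: "real \<Rightarrow> real \<Rightarrow> complex \<Rightarrow> complex" where
  "psi \<gamma> t0 w = \<i> * of_real t0 + of_real \<gamma> * (1 + w) / (1 - w)"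

definition phi :: "real \<Rightarrow> real \<Rightarrow> complex \<Rightarrow> complex" where
  "phi \<gamma> t0 s = (s - Complex \<gamma> t0) / (s + Complex \<gamma> (- t0))"

lemma psi_0: "psi \<gamma> t0 0 = Complex \<gamma> t0"
  by (simp add: psi_def complex_eq_iff)

lemma Re_cayley: "w \<noteq> 1 \<Longrightarrow> Re ((1 + w) / (1 - w)) = (1 - (cmod w)\<^sup>2) / (cmod (1 - w))\<^sup>2"
  unfolding Re_divide cmod_power2 by (simp add: power2_eq_square algebra_simps)

lemma Re_psi: "w \<noteq> 1 \<Longrightarrow> Re (psi \<gamma> t0 w) = \<gamma> * (1 - (cmod w)\<^sup>2) / (cmod (1 - w))\<^sup>2"
proof -
  assume w: "w \<noteq> 1"
  have "Re (psi \<gamma> t0 w) = \<gamma> * Re ((1 + w) / (1 - w))"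
    by (simp add: psi_def mult.assoc[symmetric] times_divide_eq_right[symmetric] del: times_divide_eq_right)
  thus ?thesis using Re_cayley[OF w] by simp
qed

lemma psi_rhp: "\<gamma> > 0 \<Longrightarrow> cmod w < 1 \<Longrightarrow> Re (psi \<gamma> t0 w) > 0"
proof -
  assume g: "\<gamma> > 0" and w: "cmod w < 1"
  have w1: "w \<noteq> 1" using w by auto
  have "(cmod w)\<^sup>2 < 1" using w by (simp add: power_less_one_iff abs_square_less_1)
  moreover have "cmod (1 - w) > 0" using w1 by simp
  ultimately show ?thesis using g by (simp add: Re_psi[OF w1])
qed

lemma psi_holo: "psi \<gamma> t0 holomorphic_on ball 0 1"
  unfolding psi_def by (intro holomorphic_intros) auto

lemma psi_diff: "w \<noteq> 1 \<Longrightarrow> b \<noteq> 1 \<Longrightarrow> psi \<gamma> t0 w - psi \<gamma> t0 b = 2 * of_real \<gamma> * (w - b) / ((1 - w) * (1 - b))"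
proof -
  assume w: "w \<noteq> 1" and b: "b \<noteq> 1"
  have w': "1 - w \<noteq> 0" and b': "1 - b \<noteq> 0" using w b by auto
  show ?thesis unfolding psi_def using w' b' by (simp add: field_simps)
qed

lemma phi_psi: "\<gamma> > 0 \<Longrightarrow> w \<noteq> 1 \<Longrightarrow> phi \<gamma> t0 (psi \<gamma> t0 w) = w"
proof -
  assume g: "\<gamma> > 0" and w: "w \<noteq> 1"
  have w': "1 - w \<noteq> 0" using w by auto
  have e1: "psi \<gamma> t0 w - Complex \<gamma> t0 = 2 * of_real \<gamma> * w / (1 - w)"
    unfolding psi_def Complex_eq using w' by (simp add: field_simps)
  have e2: "psi \<gamma> t0 w + Complex \<gamma> (- t0) = 2 * of_real \<gamma> / (1 - w)"
    unfolding psi_def Complex_eq using w' by (simp add: field_simps)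
  show ?thesis unfolding phi_def e1 e2 using g w' by (simp add: field_simps)
qed

lemma phi_ne1: "\<gamma> > 0 \<Longrightarrow> Re s > 0 \<Longrightarrow> phi \<gamma> t0 s \<noteq> 1"
proof
  assume g: "\<gamma> > 0" and s: "Re s > 0" and e: "phi \<gamma> t0 s = 1"
  have d: "s + Complex \<gamma> (- t0) \<noteq> 0" using g s by (auto simp: complex_eq_iff)
  hence "s - Complex \<gamma> t0 = s + Complex \<gamma> (- t0)" using e by (simp add: phi_def field_simps)
  thus False using g by (simp add: complex_eq_iff)
qed

lemma psi_phi: "\<gamma> > 0 \<Longrightarrow> Re s > 0 \<Longrightarrow> psi \<gamma> t0 (phi \<gamma> t0 s) = s"
proof -
  assume g: "\<gamma> > 0" and s: "Re s > 0"
  have d: "s + Complex \<gamma> (- t0) \<noteq> 0" using g s by (auto simp: complex_eq_iff)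
  have e1: "1 - phi \<gamma> t0 s = 2 * of_real \<gamma> / (s + Complex \<gamma> (- t0))"
    using d unfolding phi_def Complex_eq by (simp add: field_simps)
  have e2: "1 + phi \<gamma> t0 s = 2 * (s - \<i> * of_real t0) / (s + Complex \<gamma> (- t0))"
    using d unfolding phi_def Complex_eq by (simp add: field_simps)
  have q: "(1 + phi \<gamma> t0 s) / (1 - phi \<gamma> t0 s) = (s - \<i> * of_real t0) / of_real \<gamma>"
  proof -
    define D where "D = s + Complex \<gamma> (- t0)"
    have D: "D \<noteq> 0" using d by (simp add: D_def)
    have gg: "(of_real \<gamma> :: complex) \<noteq> 0" using g by simp
    show ?thesis unfolding e1 e2 D_def[symmetric] using D gg by (simp add: field_simps)
  qed
  have "psi \<gamma> t0 (phi \<gamma> t0 s) = \<i> * of_real t0 + of_real \<gamma> * ((1 + phi \<gamma> t0 s) / (1 - phi \<gamma> t0 s))"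
    unfolding psi_def by simp
  also have "\<dots> = s" unfolding q using g by simp
  finally show ?thesis .
qed

lemma norm_phi: "\<gamma> > 0 \<Longrightarrow> Re s > 0 \<Longrightarrow> cmod (phi \<gamma> t0 s) < 1"
proof -
  assume g: "\<gamma> > 0" and s: "Re s > 0"
  have d: "s + Complex \<gamma> (- t0) \<noteq> 0" using g s by (auto simp: complex_eq_iff)
  have "(cmod (s - Complex \<gamma> t0))\<^sup>2 < (cmod (s + Complex \<gamma> (- t0)))\<^sup>2"
    using g s unfolding cmod_power2 by (simp add: power2_eq_square algebra_simps)
  hence "cmod (s - Complex \<gamma> t0) < cmod (s + Complex \<gamma> (- t0))"
    by (rule power2_less_imp_less) simp
  thus ?thesis using d by (simp add: phi_def norm_divide divide_less_eq)
qed


definition gg :: "real \<Rightarrow> real \<Rightarrow> real" where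
  "gg \<gamma> u = 1/2 + arctan (u / \<gamma>) / pi"

lemma ec_gg: "ec (gg \<gamma> u) = - exp (\<i> * of_real (2 * arctan (u / \<gamma>)))"
proof -
  have "ec (gg \<gamma> u) = exp (\<i> * of_real pi + \<i> * of_real (2 * arctan (u / \<gamma>)))"
    unfolding ec_def gg_def by (simp add: algebra_simps)
  also have "\<dots> = exp (\<i> * of_real pi) * exp (\<i> * of_real (2 * arctan (u / \<gamma>)))"
    by (rule exp_add)
  finally show ?thesis by simp
qed

lemma psi_boundary:
  assumes g: "\<gamma> > 0"
  shows "psi \<gamma> t0 (ec (gg \<gamma> u)) = \<i> * of_real (t0 - u)" and "ec (gg \<gamma> u) \<noteq> 1"
proof -
  define a where "a = arctan (u / \<gamma>)"
  define c where "c = cos a"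
  define s where "s = sin a"
  have c: "c > 0" unfolding c_def a_def by (simp add: cos_arctan add_pos_nonneg)
  have u: "u = \<gamma> * s / c"
  proof -
    have "tan a = u / \<gamma>" unfolding a_def by (rule tan_arctan)
    thus ?thesis using g c by (simp add: tan_def s_def c_def field_simps)
  qed
  have sc: "s\<^sup>2 + c\<^sup>2 = 1" by (simp add: s_def c_def)
  define w where "w = ec (gg \<gamma> u)"
  have w: "w = - Complex (c\<^sup>2 - s\<^sup>2) (2 * s * c)"
    unfolding w_def ec_gg a_def[symmetric] exp_Euler
    by (simp add: complex_eq_iff cos_of_real sin_of_real cos_double sin_double c_def s_def power2_eq_square)
  have w1: "1 - w = of_real (2 * c) * Complex c s"
    unfolding w using sc by (simp add: complex_eq_iff power2_eq_square algebra_simps)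
  have w2: "1 + w = - \<i> * of_real (2 * s) * Complex c s"
    unfolding w using sc by (simp add: complex_eq_iff power2_eq_square algebra_simps)
  have cs: "Complex c s \<noteq> 0" using c by (simp add: complex_eq_iff)
  have ne: "1 - w \<noteq> 0" unfolding w1 using c cs by simp
  thus "ec (gg \<gamma> u) \<noteq> 1" by (simp add: w_def)
  have "of_real \<gamma> * (1 + w) / (1 - w) = - \<i> * of_real u"
    unfolding w1 w2 u using c cs g by (simp add: field_simps)
  thus "psi \<gamma> t0 (ec (gg \<gamma> u)) = \<i> * of_real (t0 - u)"
    unfolding psi_def w_def[symmetric] by (simp add: algebra_simps)
qed

lemma radial_cone:
  fixes r :: "nat \<Rightarrow> real"
  assumes g: "\<gamma> > 0" and w0: "cmod w0 = 1" "w0 \<noteq> 1"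
    and r: "\<And>n. 0 < r n" "\<And>n. r n < 1" and rlim: "r \<longlonglongrightarrow> 1"
  shows "Re (psi \<gamma> t0 w0) = 0"
    and "filterlim (\<lambda>n. psi \<gamma> t0 (of_real (r n) * w0)) (at (psi \<gamma> t0 w0) within {z. 0 < Re z \<and> \<bar>Im z - Im (psi \<gamma> t0 w0)\<bar> < 2 * Re z}) sequentially"
proof -
  define p where "p = psi \<gamma> t0 w0"
  show "Re (psi \<gamma> t0 w0) = 0" using Re_psi[OF w0(2)] w0(1) by simp
  define B where "B = cmod (1 - w0)"
  have B: "B > 0" using w0 by (simp add: B_def)
  have lim: "(\<lambda>n. psi \<gamma> t0 (of_real (r n) * w0)) \<longlonglongrightarrow> p"
  proof -
    have "(\<lambda>n. of_real (r n) * w0) \<longlonglongrightarrow> of_real 1 * w0"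
      by (intro tendsto_intros rlim)
    hence l: "(\<lambda>n. of_real (r n) * w0) \<longlonglongrightarrow> w0" by simp
    have "(\<lambda>n. \<i> * of_real t0 + of_real \<gamma> * (1 + of_real (r n) * w0) / (1 - of_real (r n) * w0)) \<longlonglongrightarrow>
          \<i> * of_real t0 + of_real \<gamma> * (1 + w0) / (1 - w0)"
      by (intro tendsto_intros l) (use w0 in auto)
    thus ?thesis by (simp add: psi_def p_def)
  qed
  have ev: "eventually (\<lambda>n. r n > 1 / (1 + B)) sequentially"
    using order_tendstoD(1)[OF rlim, of "1 / (1 + B)"] B by simp
  have cone: "psi \<gamma> t0 (of_real (r n) * w0) \<in> {z. 0 < Re z \<and> \<bar>Im z - Im p\<bar> < 2 * Re z} - {p}"
    if rn: "r n > 1 / (1 + B)" for n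
  proof -
    define \<rho> where "\<rho> = r n"
    have \<rho>: "0 < \<rho>" "\<rho> < 1" "\<rho> * (1 + B) > 1" using r[of n] rn B by (auto simp: \<rho>_def field_simps)
    define w where "w = of_real \<rho> * w0"
    have nw: "cmod w = \<rho>" using \<rho> w0 by (simp add: w_def norm_mult)
    have w1: "w \<noteq> 1" using nw \<rho> by auto
    define A where "A = cmod (1 - w)"
    have A: "A > 0" using w1 by (simp add: A_def)
    define z where "z = psi \<gamma> t0 w"
    have Rez: "Re z = \<gamma> * (1 - \<rho>\<^sup>2) / A\<^sup>2" unfolding z_def A_def using Re_psi[OF w1] nw by simp
    have zp: "z - p = 2 * of_real \<gamma> * (w - w0) / ((1 - w) * (1 - w0))"
      unfolding z_def p_def by (rule psi_diff[OF w1 w0(2)])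
    have "cmod (w - w0) = 1 - \<rho>"
    proof -
      have e: "w - w0 = of_real (\<rho> - 1) * w0" by (simp add: w_def algebra_simps)
      have "cmod (w - w0) = cmod (of_real (\<rho> - 1) :: complex) * cmod w0" unfolding e by (rule norm_mult)
      also have "\<dots> = \<bar>\<rho> - 1\<bar>" unfolding norm_of_real w0(1) by simp
      finally show ?thesis using \<rho> by simp
    qed
    hence nzp: "cmod (z - p) = 2 * \<gamma> * (1 - \<rho>) / (A * B)"
      unfolding zp using g by (simp add: norm_mult norm_divide A_def B_def)
    have AB: "A \<le> B + (1 - \<rho>)"
    proof -
      have "1 - w = (1 - w0) + (w0 - w)" by simp
      hence "A \<le> cmod (1 - w0) + cmod (w0 - w)" unfolding A_def by (metis norm_triangle_ineq)
      also have "cmod (w0 - w) = 1 - \<rho>" using \<open>cmod (w - w0) = 1 - \<rho>\<close> by (simp add: norm_minus_commute)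
      finally show ?thesis by (simp add: B_def)
    qed
    have key: "A < (1 + \<rho>) * B" using AB \<rho> by (simp add: algebra_simps)
    have "cmod (z - p) < 2 * Re z"
    proof -
      have "cmod (z - p) = 2 * \<gamma> * (1 - \<rho>) * A / (A\<^sup>2 * B)"
        unfolding nzp using A B by (simp add: power2_eq_square field_simps)
      also have "\<dots> < 2 * \<gamma> * (1 - \<rho>) * ((1 + \<rho>) * B) / (A\<^sup>2 * B)"
        using key A B g \<rho> by (intro divide_strict_right_mono mult_strict_left_mono) auto
      also have "\<dots> = 2 * Re z" unfolding Rez using B A by (simp add: power2_eq_square field_simps)
      finally show ?thesis .
    qed
    moreover have "\<bar>Im z - Im p\<bar> \<le> cmod (z - p)" by (metis abs_Im_le_cmod minus_complex.sel(2))
    moreover have "0 < Re z" unfolding z_def by (rule psi_rhp[OF g]) (use nw \<rho> in simp)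
    moreover have "z \<noteq> p" using nzp g \<rho> A B by auto
    ultimately show ?thesis by (simp add: z_def w_def \<rho>_def)
  qed
  show "filterlim (\<lambda>n. psi \<gamma> t0 (of_real (r n) * w0)) (at (psi \<gamma> t0 w0) within {z. 0 < Re z \<and> \<bar>Im z - Im (psi \<gamma> t0 w0)\<bar> < 2 * Re z}) sequentially"
    unfolding p_def[symmetric]
    by (rule filterlim_at_withinI[OF lim]) (rule eventually_mono[OF ev cone])
qed


lemma good_radius:
  fixes G :: "complex \<Rightarrow> complex"
  assumes holo: "G holomorphic_on ball 0 1" and G0: "G 0 \<noteq> 0" and ab: "0 \<le> a" "a < b" "b < 1"
  shows "\<exists>r. a < r \<and> r < b \<and> (\<forall>w. cmod w = r \<longrightarrow> G w \<noteq> 0)"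
proof -
  define bad where "bad = cmod ` {w\<in>cball 0 b. G w = 0}"
  have "finite bad" unfolding bad_def by (intro finite_imageI zeros_finite[OF holo G0 ab(3)])
  moreover have "infinite {a<..<b}" using ab by simp
  ultimately obtain r where r: "r \<in> {a<..<b}" "r \<notin> bad"
    by (metis Diff_infinite_finite ex_in_conv finite.emptyI DiffE)
  have "G w \<noteq> 0" if "cmod w = r" for w
  proof
    assume "G w = 0"
    hence "w \<in> {w\<in>cball 0 b. G w = 0}" using that r by auto
    hence "r \<in> bad" using that by (auto simp: bad_def)
    thus False using r by simp
  qed
  thus ?thesis using r by auto
qed

lemma radius_seq:
  fixes G :: "complex \<Rightarrow> complex"
  assumes holo: "G holomorphic_on ball 0 1" and G0: "G 0 \<noteq> 0"
  obtains r :: "nat \<Rightarrow> real" where "\<And>n. 0 < r n" "\<And>n. r n < 1" "\<And>n w. cmod w = r n \<Longrightarrow> G w \<noteq> 0"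
    "r \<longlonglongrightarrow> 1"
proof -
  have "\<forall>n. \<exists>r. 1 - 1 / (real n + 2) < r \<and> r < 1 \<and> (\<forall>w. cmod w = r \<longrightarrow> G w \<noteq> 0)"
  proof
    fix n
    define a0 where "a0 = 1 - 1 / (real n + 2)"
    have a0: "a0 < 1" "0 \<le> a0" by (auto simp: a0_def field_simps)
    have b0: "a0 < (1 + a0) / 2" "(1 + a0) / 2 < 1" using a0 by auto
    obtain \<rho> where "a0 < \<rho>" "\<rho> < (1 + a0) / 2" "(\<forall>w. cmod w = \<rho> \<longrightarrow> G w \<noteq> 0)"
      using good_radius[OF holo G0 a0(2) b0] by blast
    hence "1 - 1 / (real n + 2) < \<rho> \<and> \<rho> < 1 \<and> (\<forall>w. cmod w = \<rho> \<longrightarrow> G w \<noteq> 0)" using b0 by (auto simp: a0_def)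
    thus "\<exists>r. 1 - 1 / (real n + 2) < r \<and> r < 1 \<and> (\<forall>w. cmod w = r \<longrightarrow> G w \<noteq> 0)"
      by (intro exI[of _ \<rho>]) auto
  qed
  then obtain r where r: "\<And>n. 1 - 1 / (real n + 2) < r n" "\<And>n. r n < 1" "\<And>n w. cmod w = r n \<Longrightarrow> G w \<noteq> 0"
    by metis
  have pos: "0 < r n" for n
  proof -
    have "0 \<le> 1 - 1 / (real n + 2)" by (simp add: field_simps)
    thus ?thesis using r(1)[of n] by linarith
  qed
  have "filterlim (\<lambda>n. real n + 2) at_top sequentially"
    using filterlim_tendsto_add_at_top[OF tendsto_const[of 2] filterlim_real_sequentially] by (simp add: add.commute)
  hence "(\<lambda>n. 1 / (real n + 2)) \<longlonglongrightarrow> 0"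
    by (intro tendsto_divide_0[OF tendsto_const] filterlim_at_top_imp_at_infinity)
  hence l1: "(\<lambda>n. 1 - 1 / (real n + 2)) \<longlonglongrightarrow> 1"
    using tendsto_diff[OF tendsto_const[of 1]] by fastforce
  have "r \<longlonglongrightarrow> 1"
    by (rule tendsto_sandwich[OF _ _ l1 tendsto_const]) (auto intro!: always_eventually less_imp_le r)
  thus ?thesis using that pos r by blast
qed

lemma zorder_transfer:
  fixes f :: "complex \<Rightarrow> complex"
  assumes g: "\<gamma> > 0" and holo: "f holomorphic_on {s. 0 < Re s}" and a: "0 < Re a"
    and nz: "\<exists>s. 0 < Re s \<and> f s \<noteq> 0"
  shows "zorder (f \<circ> psi \<gamma> t0) (phi \<gamma> t0 a) = zorder f a"
proof -
  define b where "b = phi \<gamma> t0 a"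
  have b1: "b \<noteq> 1" unfolding b_def by (rule phi_ne1[OF g a])
  have pb: "psi \<gamma> t0 b = a" unfolding b_def by (rule psi_phi[OF g a])
  have S: "open {s. 0 < Re s}" "connected {s. 0 < Re s}"
    by (auto simp: open_halfspace_Re_gt intro!: convex_connected convex_halfspace_Re_gt)
  have fa: "f analytic_on {a}"
    using holo S(1) a by (simp add: analytic_at) (metis mem_Collect_eq)
  define d where "d = cmod (1 - b)"
  have d: "d > 0" using b1 by (simp add: d_def)
  have psi_an: "psi \<gamma> t0 holomorphic_on ball b d"
    unfolding psi_def by (intro holomorphic_intros) (auto simp: d_def dist_norm norm_minus_commute)
  have z1: "zorder (\<lambda>x. psi \<gamma> t0 x - psi \<gamma> t0 b) b = 1"
  proof (rule zorder_eqI[where S = "ball b d" and g = "\<lambda>x. 2 * of_real \<gamma> / ((1 - x) * (1 - b))"])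
    show "(\<lambda>x. 2 * complex_of_real \<gamma> / ((1 - x) * (1 - b))) holomorphic_on ball b d"
      by (intro holomorphic_intros) (use b1 in \<open>auto simp: d_def dist_norm norm_minus_commute\<close>)
    show "2 * complex_of_real \<gamma> / ((1 - b) * (1 - b)) \<noteq> 0" using g b1 by simp
    fix w assume w: "w \<in> ball b d" "w \<noteq> b"
    have w1: "w \<noteq> 1" using w by (auto simp: d_def dist_norm norm_minus_commute)
    show "psi \<gamma> t0 w - psi \<gamma> t0 b = 2 * complex_of_real \<gamma> / ((1 - w) * (1 - b)) * (w - b) powi 1"
      using psi_diff[OF w1 b1] by simp
  qed (use d in auto)
  have ev_psi: "eventually (\<lambda>w. psi \<gamma> t0 w \<noteq> psi \<gamma> t0 b) (at b)"
  proof -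
    have "eventually (\<lambda>w. w \<in> ball b d) (at b)"
      using d by (intro eventually_at_in_open') auto
    thus ?thesis
    proof (rule eventually_mono[OF eventually_conj[OF _ eventually_neq_at_within[of b b]]])
      fix w assume "w \<in> ball b d \<and> w \<noteq> b"
      hence w: "w \<in> ball b d" "w \<noteq> b" by auto
      have w1: "w \<noteq> 1" using w by (auto simp: d_def dist_norm norm_minus_commute)
      have "1 - w \<noteq> 0" "1 - b \<noteq> 0" "w - b \<noteq> 0" "(of_real \<gamma> :: complex) \<noteq> 0" using w1 b1 w g by auto
      hence "psi \<gamma> t0 w - psi \<gamma> t0 b \<noteq> 0" unfolding psi_diff[OF w1 b1] by simp
      thus "psi \<gamma> t0 w \<noteq> psi \<gamma> t0 b" by simp
    qed
  qed
  obtain s where s: "0 < Re s" "f s \<noteq> 0" using nz by auto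
  have ev_f: "eventually (\<lambda>w. f w \<noteq> 0) (at (psi \<gamma> t0 b))"
    unfolding pb using non_zero_neighbour_alt[OF holo S, of a s] a s by (auto elim: eventually_mono)
  have "zorder (f \<circ> psi \<gamma> t0) b = zorder f (psi \<gamma> t0 b) * zorder (\<lambda>x. psi \<gamma> t0 x - psi \<gamma> t0 b) b"
  proof (rule zorder_compose')
    show "isolated_singularity_at f (psi \<gamma> t0 b)" unfolding pb by (rule isolated_singularity_at_analytic[OF fa])
    show "not_essential f (psi \<gamma> t0 b)" unfolding pb by (rule not_essential_analytic[OF fa])
    show "psi \<gamma> t0 analytic_on {b}" using psi_an d by (simp add: analytic_at) (metis centre_in_ball open_ball)
  qed (use ev_f ev_psi in auto)
  thus ?thesis using z1 pb by (simp add: b_def)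
qed

lemma phi_log_bound:
  assumes g: "\<gamma> > 0" and a: "0 < Re a" "Re a < \<gamma>" and t: "\<bar>Im a - t0\<bar> \<le> 1/2"
  shows "phi \<gamma> t0 a \<noteq> 0" and "Re a * (2 * \<gamma> / (4 * \<gamma>\<^sup>2 + 1)) \<le> - ln (cmod (phi \<gamma> t0 a))"
proof -
  define x where "x = Re a"
  define d where "d = Im a - t0"
  define A where "A = (x + \<gamma>)\<^sup>2 + d\<^sup>2"
  define Bq where "Bq = (x - \<gamma>)\<^sup>2 + d\<^sup>2"
  have x: "0 < x" "x < \<gamma>" using a by (auto simp: x_def)
  have A: "A > 0" using x g unfolding A_def by (simp add: add_pos_nonneg)
  have Bq: "Bq > 0" using x g unfolding Bq_def by (simp add: add_pos_nonneg)
  have den: "a + Complex \<gamma> (- t0) \<noteq> 0" using g a by (auto simp: complex_eq_iff)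
  have n1: "(cmod (a - Complex \<gamma> t0))\<^sup>2 = Bq" unfolding cmod_power2 Bq_def x_def d_def
    by (simp add: power2_eq_square algebra_simps)
  have n2: "(cmod (a + Complex \<gamma> (- t0)))\<^sup>2 = A" unfolding cmod_power2 A_def x_def d_def
    by (simp add: power2_eq_square algebra_simps)
  define \<rho> where "\<rho> = cmod (phi \<gamma> t0 a)"
  have \<rho>2: "\<rho>\<^sup>2 = Bq / A" unfolding \<rho>_def phi_def norm_divide power_divide n1 n2 ..
  have \<rho>pos: "\<rho> > 0" using \<rho>2 Bq A by (metis divide_pos_pos less_le norm_ge_zero \<rho>_def power_zero_numeral zero_less_power2)
  thus "phi \<gamma> t0 a \<noteq> 0" by (auto simp: \<rho>_def)
  have "ln (\<rho>\<^sup>2) \<le> \<rho>\<^sup>2 - 1" by (rule ln_le_minus_one) (use \<rho>pos in simp)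
  moreover have "ln (\<rho>\<^sup>2) = 2 * ln \<rho>" by (simp add: ln_realpow)
  ultimately have "2 * ln \<rho> \<le> Bq / A - 1" using \<rho>2 by simp
  also have "Bq / A - 1 = - (4 * x * \<gamma>) / A" using A unfolding A_def Bq_def
    by (simp add: field_simps power2_eq_square)
  finally have l: "2 * x * \<gamma> / A \<le> - ln \<rho>" by simp
  have "A \<le> 4 * \<gamma>\<^sup>2 + 1"
  proof -
    have "(x + \<gamma>)\<^sup>2 \<le> (2 * \<gamma>)\<^sup>2" using x g by (intro power_mono) auto
    moreover have "d\<^sup>2 \<le> 1"
    proof -
      have "d\<^sup>2 = \<bar>d\<bar>\<^sup>2" by simp
      also have "\<dots> \<le> (1/2)\<^sup>2" by (rule power_mono) (use t in \<open>auto simp: d_def\<close>)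
      also have "(1/2::real)\<^sup>2 = 1/4" by (simp add: power2_eq_square)
      finally show ?thesis by linarith
    qed
    ultimately show ?thesis unfolding A_def by (simp add: power_mult_distrib)
  qed
  hence "2 * x * \<gamma> / (4 * \<gamma>\<^sup>2 + 1) \<le> 2 * x * \<gamma> / A"
    using A x g by (intro divide_left_mono) auto
  thus "Re a * (2 * \<gamma> / (4 * \<gamma>\<^sup>2 + 1)) \<le> - ln (cmod (phi \<gamma> t0 a))"
  proof -
    have e: "Re a * (2 * \<gamma> / (4 * \<gamma>\<^sup>2 + 1)) = 2 * x * \<gamma> / (4 * \<gamma>\<^sup>2 + 1)" by (simp add: x_def)
    show ?thesis unfolding e using order.trans[OF \<open>2 * x * \<gamma> / (4 * \<gamma>\<^sup>2 + 1) \<le> 2 * x * \<gamma> / A\<close> l] by (simp add: \<rho>_def)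
  qed
qed


lemma fatou_circle:
  fixes u :: "nat \<Rightarrow> real \<Rightarrow> real" and I :: "nat \<Rightarrow> real"
  assumes meas: "\<And>n. u n \<in> borel_measurable borel"
    and nonneg: "\<And>n x. x \<in> {0..1} \<Longrightarrow> 0 \<le> u n x"
    and int: "\<And>n. (u n has_integral I n) {0..1::real}"
    and bound: "\<And>n. I n \<le> C"
  shows "(\<integral>\<^sup>+x. liminf (\<lambda>n. ennreal (u n x)) * indicator {0..1} x \<partial>lborel) \<le> ennreal C"
proof -
  have "(\<integral>\<^sup>+x. liminf (\<lambda>n. ennreal (u n x)) * indicator {0..1} x \<partial>lborel) =
        (\<integral>\<^sup>+x. liminf (\<lambda>n. ennreal (u n x) * indicator {0..1} x) \<partial>lborel)"
    by (intro nn_integral_cong) (auto simp: indicator_def Liminf_const)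
  also have "\<dots> \<le> liminf (\<lambda>n. \<integral>\<^sup>+x. ennreal (u n x) * indicator {0..1} x \<partial>lborel)"
    by (rule nn_integral_liminf) (use meas in measurable)
  also have "\<dots> = liminf (\<lambda>n. ennreal (I n))"
    by (subst nn_integral_has_integral_lebesgue'[OF nonneg int]) simp_all
  also have "\<dots> \<le> ennreal C"
    by (rule Liminf_le) (auto intro!: always_eventually ennreal_leI bound)
  finally show ?thesis .
qed

definition ggd :: "real \<Rightarrow> real \<Rightarrow> real" where
  "ggd \<gamma> u = \<gamma> / (pi * (\<gamma>\<^sup>2 + u\<^sup>2))"

lemma gg_deriv: "\<gamma> > 0 \<Longrightarrow> (gg \<gamma> has_real_derivative ggd \<gamma> u) (at u)"
proof -
  assume g: "\<gamma> > 0"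
  have d1: "((\<lambda>u. u / \<gamma>) has_real_derivative 1 / \<gamma>) (at u)"
    by (rule DERIV_cdivide[OF DERIV_ident])
  have d2: "((\<lambda>u. arctan (u / \<gamma>)) has_real_derivative inverse (1 + (u / \<gamma>)\<^sup>2) * (1 / \<gamma>)) (at u)"
    by (rule DERIV_chain2[OF DERIV_arctan d1])
  have d3: "((\<lambda>u. 1/2 + arctan (u / \<gamma>) / pi) has_real_derivative 0 + inverse (1 + (u / \<gamma>)\<^sup>2) * (1 / \<gamma>) / pi) (at u)"
    by (intro DERIV_add DERIV_const DERIV_cdivide d2)
  define D where "D = \<gamma>\<^sup>2 + u\<^sup>2"
  have D: "D > 0" using g by (simp add: D_def add_pos_nonneg)
  have "1 + (u / \<gamma>)\<^sup>2 = D / \<gamma>\<^sup>2" using g by (simp add: D_def field_simps)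
  hence "0 + inverse (1 + (u / \<gamma>)\<^sup>2) * (1 / \<gamma>) / pi = \<gamma> / (pi * D)"
    using g D by (simp add: field_simps power2_eq_square)
  thus ?thesis using d3 by (simp add: gg_def[abs_def] ggd_def D_def)
qed

lemma gg_bounds: "0 < gg \<gamma> u" "gg \<gamma> u < 1"
  using arctan_bounded[of "u / \<gamma>"] pi_gt_zero
  by (auto simp: gg_def field_simps)

lemma gg_cont: "\<gamma> > 0 \<Longrightarrow> continuous_on UNIV (gg \<gamma>)"
  unfolding gg_def by (intro continuous_intros) auto

lemma ggd_cont: "\<gamma> > 0 \<Longrightarrow> continuous_on UNIV (ggd \<gamma>)"
  unfolding ggd_def by (intro continuous_intros) (auto simp: add_pos_nonneg)

lemma final_bound:
  fixes Hf F :: "real \<Rightarrow> ennreal"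
  assumes g: "\<gamma> > 0" and C: "0 \<le> C" and L: "0 \<le> L"
    and Hm: "Hf \<in> borel_measurable borel"
    and fat: "(\<integral>\<^sup>+x. Hf x * indicator {0..1} x \<partial>lborel) \<le> ennreal C"
    and pw: "AE t in lborel. t \<in> {\<tau>..\<tau>+1} \<longrightarrow>
        F t \<le> ennreal L + ennreal (pi * (4 * \<gamma>\<^sup>2 + 1) / (4 * \<gamma>)) * (Hf (gg \<gamma> (\<tau> + 1/2 - t)) * ennreal (ggd \<gamma> (\<tau> + 1/2 - t)))"
  shows "(\<integral>\<^sup>+t\<in>{\<tau>..\<tau>+1}. F t \<partial>lborel) \<le> ennreal (L + pi * (4 * \<gamma>\<^sup>2 + 1) / (4 * \<gamma>) * C)"
proof -
  define K where "K = pi * (4 * \<gamma>\<^sup>2 + 1) / (4 * \<gamma>)"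
  have K: "K \<ge> 0" using g by (simp add: K_def)
  define t0 where "t0 = \<tau> + 1/2"
  have ggm[measurable]: "gg \<gamma> \<in> borel_measurable borel"
    by (rule borel_measurable_continuous_onI[OF gg_cont[OF g]])
  have ggdm[measurable]: "ggd \<gamma> \<in> borel_measurable borel"
    by (rule borel_measurable_continuous_onI[OF ggd_cont[OF g]])
  note Hm[measurable]
  define \<Phi> where "\<Phi> t = (ennreal L + ennreal K * (Hf (gg \<gamma> (t0 - t)) * ennreal (ggd \<gamma> (t0 - t)))) * indicator {\<tau>..\<tau>+1} t" for t
  have \<Phi>m[measurable]: "\<Phi> \<in> borel_measurable borel" unfolding \<Phi>_def by measurable
  have "(\<integral>\<^sup>+t\<in>{\<tau>..\<tau>+1}. F t \<partial>lborel) \<le> (\<integral>\<^sup>+t. \<Phi> t \<partial>lborel)"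
    by (rule nn_integral_mono_AE) (use pw in \<open>auto simp: \<Phi>_def K_def t0_def indicator_def elim!: eventually_mono\<close>)
  also have "(\<integral>\<^sup>+t. \<Phi> t \<partial>lborel) = ennreal \<bar>-1\<bar> * (\<integral>\<^sup>+u. \<Phi> (t0 + (-1) * u) \<partial>lborel)"
    by (rule nn_integral_real_affine) auto
  also have "(\<integral>\<^sup>+u. \<Phi> (t0 + (-1) * u) \<partial>lborel) =
      (\<integral>\<^sup>+u. ennreal L * indicator {-1/2..1/2::real} u + ennreal K * (Hf (gg \<gamma> u) * ennreal (ggd \<gamma> u) * indicator {-1/2..1/2::real} u) \<partial>lborel)"
    by (intro nn_integral_cong) (auto simp: \<Phi>_def t0_def indicator_def algebra_simps)
  also have "\<dots> = ennreal L * (\<integral>\<^sup>+u. indicator {-1/2..1/2::real} u \<partial>lborel) + ennreal K * (\<integral>\<^sup>+u. Hf (gg \<gamma> u) * ennreal (ggd \<gamma> u) * indicator {-1/2..1/2::real} u \<partial>lborel)"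
    by (subst nn_integral_add) (auto simp: nn_integral_cmult mult.assoc)
  also have "(\<integral>\<^sup>+u. indicator {-1/2..1/2::real} u \<partial>lborel) = 1" by simp
  also have "(\<integral>\<^sup>+u. Hf (gg \<gamma> u) * ennreal (ggd \<gamma> u) * indicator {-1/2..1/2::real} u \<partial>lborel) =
       (\<integral>\<^sup>+x. Hf x * indicator {gg \<gamma> (-1/2)..gg \<gamma> (1/2)} x \<partial>lborel)"
  proof (rule nn_integral_substitution_aux[symmetric])
    show "continuous_on {-1/2..1/2} (ggd \<gamma>)" by (rule continuous_on_subset[OF ggd_cont[OF g]]) auto
    show "\<And>x. x \<in> {-1/2..1/2} \<Longrightarrow> (gg \<gamma> has_real_derivative ggd \<gamma> x) (at x)" using gg_deriv[OF g] by blast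
    show "\<And>x. x \<in> {-1/2..1/2} \<Longrightarrow> 0 \<le> ggd \<gamma> x" using g by (simp add: ggd_def add_pos_nonneg less_imp_le)
  qed auto
  also have "\<dots> \<le> (\<integral>\<^sup>+x. Hf x * indicator {0..1} x \<partial>lborel)"
  proof (intro nn_integral_mono)
    fix x
    have "gg \<gamma> (-1/2) > 0" "gg \<gamma> (1/2) < 1" using gg_bounds by auto
    thus "Hf x * indicator {gg \<gamma> (-1/2)..gg \<gamma> (1/2)} x \<le> Hf x * indicator {0..1} x"
      by (auto simp: indicator_def)
  qed
  also note fat
  also have "ennreal L * 1 + ennreal K * ennreal C = ennreal (L + K * C)"
    using K C L by (simp add: ennreal_mult ennreal_plus)
  finally show ?thesis by (simp add: K_def mult_left_mono)
qed


lemma setup_M: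
  fixes f :: "complex \<Rightarrow> complex"
  assumes bdd: "bounded (f ` rhp)" and s: "0 < Re s"
  shows "cmod (f s) \<le> sup_norm_rhp f"
proof -
  obtain B where B: "\<forall>x\<in>f ` rhp. norm x \<le> B" using bdd unfolding bounded_iff by blast
  have bd: "bdd_above ((\<lambda>s. cmod (f s)) ` rhp)"
  proof (rule bdd_aboveI2)
    fix x assume "x \<in> rhp" thus "cmod (f x) \<le> B" using B by blast
  qed
  have sr: "s \<in> rhp" using s by (simp add: rhp_def)
  show ?thesis unfolding sup_norm_rhp_def by (rule cSUP_upper[OF sr bd])
qed

definition Zn :: "(complex \<Rightarrow> complex) \<Rightarrow> real \<Rightarrow> complex set" where
  "Zn G \<rho> = {w\<in>ball 0 \<rho>. G w = 0}"
definition Sn :: "(complex \<Rightarrow> complex) \<Rightarrow> real \<Rightarrow> real" where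
  "Sn G \<rho> = (\<Sum>b\<in>Zn G \<rho>. real (nat (zorder G b)) * ln (\<rho> / cmod b))"

lemma jensen_seq:
  fixes G :: "complex \<Rightarrow> complex" and \<rho> :: real
  assumes holo: "G holomorphic_on ball 0 1" and G0: "G 0 \<noteq> 0"
    and r: "0 < \<rho>" "\<rho> < 1" "\<And>w. cmod w = \<rho> \<Longrightarrow> G w \<noteq> 0"
    and M: "\<And>w. cmod w < 1 \<Longrightarrow> cmod (G w) \<le> M"
  shows "finite (Zn G \<rho>)"
    and "((\<lambda>x. ln (cmod (G (of_real \<rho> * ec x)))) has_integral (ln (cmod (G 0)) + Sn G \<rho>)) {0..1}"
    and "0 \<le> Sn G \<rho>"
    and "ln (cmod (G 0)) + Sn G \<rho> \<le> ln M"
    and "\<And>b. b \<in> Zn G \<rho> \<Longrightarrow> 0 \<le> real (nat (zorder G b)) * ln (\<rho> / cmod b)"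
    and "\<And>x. ln (cmod (G (of_real \<rho> * ec x))) \<le> ln M"
proof -
  show fin: "finite (Zn G \<rho>)" unfolding Zn_def by (rule jensen(1)[OF holo G0 r(1) r(2) r(3)])
  have J: "((\<lambda>x. ln (cmod (G (of_real \<rho> * ec x)))) has_integral (ln (cmod (G 0)) + Sn G \<rho>)) {0..1}"
    unfolding Sn_def Zn_def by (rule jensen(2)[OF holo G0 r(1) r(2) r(3)])
  thus "((\<lambda>x. ln (cmod (G (of_real \<rho> * ec x)))) has_integral (ln (cmod (G 0)) + Sn G \<rho>)) {0..1}" .
  have nn: "0 \<le> real (nat (zorder G b)) * ln (\<rho> / cmod b)" if "b \<in> Zn G \<rho>" for b
  proof -
    have "b \<noteq> 0" using that G0 by (auto simp: Zn_def)
    moreover have "cmod b < \<rho>" using that by (auto simp: Zn_def)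
    ultimately have "1 \<le> \<rho> / cmod b" by (simp add: field_simps)
    hence "0 \<le> ln (\<rho> / cmod b)" by simp
    thus ?thesis by simp
  qed
  thus "\<And>b. b \<in> Zn G \<rho> \<Longrightarrow> 0 \<le> real (nat (zorder G b)) * ln (\<rho> / cmod b)" by blast
  show "0 \<le> Sn G \<rho>" unfolding Sn_def by (rule sum_nonneg) (use nn in auto)
  have le: "ln (cmod (G (of_real \<rho> * ec x))) \<le> ln M" for x
  proof -
    have nw: "cmod (of_real \<rho> * ec x) = \<rho>" using r(1) by (simp add: norm_mult)
    have p: "0 < cmod (G (of_real \<rho> * ec x))" using r(3)[OF nw] by simp
    moreover have q: "cmod (G (of_real \<rho> * ec x)) \<le> M" using M[of "of_real \<rho> * ec x"] nw r(2) by simp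
    ultimately have "0 < M" by linarith
    thus ?thesis by (subst ln_le_cancel_iff[OF p \<open>0 < M\<close>]) (rule q)
  qed
  thus "\<And>x. ln (cmod (G (of_real \<rho> * ec x))) \<le> ln M" .
  have c: "((\<lambda>x. ln M) has_integral ln M) {0..1::real}" using has_integral_const_real[of "ln M" 0 1] by simp
  show "ln (cmod (G 0)) + Sn G \<rho> \<le> ln M" using J c le by (rule has_integral_le)
qed

theorem theorem3p6:
  fixes f :: "complex \<Rightarrow> complex" and \<gamma> c :: real and g :: "real \<Rightarrow> complex"
  assumes holo: "f holomorphic_on rhp"
    and bdd: "bounded (f ` rhp)"
    and gamma_pos: "\<gamma> > 0" and c_pos: "c > 0"
    and lower: "\<And>\<tau>. cmod (f (Complex \<gamma> \<tau>)) \<ge> c"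
    and bv: "AE t in lborel. nontangential_limit f t (g t)"
  shows "\<forall>\<tau>::real.
      (let Z = {s. f s = 0 \<and> \<tau> \<le> Im s \<and> Im s \<le> \<tau> + 1 \<and> 0 < Re s \<and> Re s < \<gamma>} in
        (\<lambda>s. real (zero_mult f s) * Re s) summable_on Z \<and>
        (\<Sum>\<^sub>\<infinity>s\<in>Z. real (zero_mult f s) * Re s)
          \<le> (4 * \<gamma>\<^sup>2 + 1) / (2 * \<gamma>) * ln (sup_norm_rhp f / c))
    \<and> (\<integral>\<^sup>+ t\<in>{\<tau>..\<tau>+1}. ennreal \<bar>ln (cmod (g t))\<bar> \<partial>lborel)
        \<le> ennreal (\<bar>ln (sup_norm_rhp f)\<bar>
            + pi / 2 * ((4 * \<gamma>\<^sup>2 + 1) / (2 * \<gamma>)) * ln (sup_norm_rhp f / c))"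
proof (intro allI)
  fix \<tau> :: real
  define M where "M = sup_norm_rhp f"
  have Mb: "\<And>s. 0 < Re s \<Longrightarrow> cmod (f s) \<le> M" unfolding M_def by (rule setup_M[OF bdd])
  have cM: "c \<le> M" using lower[of 0] Mb[of "Complex \<gamma> 0"] gamma_pos by simp
  have Mpos: "0 < M" using cM c_pos by simp
  define t0 where "t0 = \<tau> + 1/2"
  define G where "G = f \<circ> psi \<gamma> t0"
  have holoR: "f holomorphic_on {s. 0 < Re s}" using holo by (simp add: rhp_def)
  have holoG: "G holomorphic_on ball 0 1" unfolding G_def
    by (rule holomorphic_on_compose_gen[OF psi_holo holoR]) (auto simp: psi_rhp[OF gamma_pos])
  have G0: "G 0 = f (Complex \<gamma> t0)" by (simp add: G_def psi_0)
  have cG0: "c \<le> cmod (G 0)" using lower[of t0] G0 by simp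
  have G0nz: "G 0 \<noteq> 0" using cG0 c_pos by auto
  have lnc: "ln c \<le> ln (cmod (G 0))" by (subst ln_le_cancel_iff) (use cG0 c_pos in auto)
  have GM: "\<And>w. cmod w < 1 \<Longrightarrow> cmod (G w) \<le> M" unfolding G_def using Mb psi_rhp[OF gamma_pos] by simp
  obtain r where r: "\<And>n. 0 < r n" "\<And>n. r n < 1" "\<And>n w. cmod w = r n \<Longrightarrow> G w \<noteq> 0" "r \<longlonglongrightarrow> 1"
    by (rule radius_seq[OF holoG G0nz]) blast
  define K where "K = (4 * \<gamma>\<^sup>2 + 1) / (2 * \<gamma>)"
  have Kpos: "K > 0" using gamma_pos by (simp add: K_def add_pos_nonneg)
  have nzf: "\<exists>s. 0 < Re s \<and> f s \<noteq> 0" using G0nz G0 gamma_pos by (intro exI[of _ "Complex \<gamma> t0"]) auto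
  show "(let Z = {s. f s = 0 \<and> \<tau> \<le> Im s \<and> Im s \<le> \<tau> + 1 \<and> 0 < Re s \<and> Re s < \<gamma>} in
        (\<lambda>s. real (zero_mult f s) * Re s) summable_on Z \<and>
        (\<Sum>\<^sub>\<infinity>s\<in>Z. real (zero_mult f s) * Re s)
          \<le> (4 * \<gamma>\<^sup>2 + 1) / (2 * \<gamma>) * ln (sup_norm_rhp f / c))
    \<and> (\<integral>\<^sup>+ t\<in>{\<tau>..\<tau>+1}. ennreal \<bar>ln (cmod (g t))\<bar> \<partial>lborel)
        \<le> ennreal (\<bar>ln (sup_norm_rhp f)\<bar>
            + pi / 2 * ((4 * \<gamma>\<^sup>2 + 1) / (2 * \<gamma>)) * ln (sup_norm_rhp f / c))"
  proof
    define Z where "Z = {s. f s = 0 \<and> \<tau> \<le> Im s \<and> Im s \<le> \<tau> + 1 \<and> 0 < Re s \<and> Re s < \<gamma>}"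
    define m where "m a = real (zero_mult f a)" for a
    have fb: "(\<Sum>a\<in>F. m a * Re a) \<le> K * ln (M / c)" if F: "finite F" "F \<subseteq> Z" for F
    proof -
      have Fa: "f a = 0 \<and> \<tau> \<le> Im a \<and> Im a \<le> \<tau> + 1 \<and> 0 < Re a \<and> Re a < \<gamma>" if "a \<in> F" for a
        using F(2) that by (auto simp: Z_def)
      define ph where "ph = phi \<gamma> t0"
      have phn: "cmod (ph a) < 1" if "a \<in> F" for a
        unfolding ph_def by (rule norm_phi[OF gamma_pos]) (use Fa[OF that] in simp)
      have phl: "ph a \<noteq> 0 \<and> Re a * (2 * \<gamma> / (4 * \<gamma>\<^sup>2 + 1)) \<le> - ln (cmod (ph a))" if "a \<in> F" for a
      proof -
        have "\<tau> \<le> Im a" "Im a \<le> \<tau> + 1" using Fa[OF that] by auto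
        hence ib: "\<bar>Im a - t0\<bar> \<le> 1/2" unfolding t0_def abs_le_iff by linarith
        show ?thesis unfolding ph_def using phi_log_bound[OF gamma_pos _ _ ib] Fa[OF that] by simp
      qed
      have pp: "psi \<gamma> t0 (ph a) = a" if "a \<in> F" for a
        unfolding ph_def by (rule psi_phi[OF gamma_pos]) (use Fa[OF that] in simp)
      have Gph: "G (ph a) = 0" if "a \<in> F" for a using pp[OF that] Fa[OF that] by (simp add: G_def)
      have zt: "zorder G (ph a) = zorder f a" if "a \<in> F" for a
        unfolding G_def ph_def by (rule zorder_transfer[OF gamma_pos holoR _ nzf]) (use Fa[OF that] in simp)
      have inj: "inj_on ph F"
      proof (rule inj_onI)
        fix a b assume "a \<in> F" "b \<in> F" "ph a = ph b"
        thus "a = b" using pp by metis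
      qed
      have ev: "eventually (\<lambda>n. \<forall>a\<in>F. cmod (ph a) < r n) sequentially"
        by (rule eventually_ball_finite[OF F(1)]) (use order_tendstoD(1)[OF r(4)] phn in auto)
      have evle: "eventually (\<lambda>n. (\<Sum>a\<in>F. m a * ln (r n / cmod (ph a))) \<le> ln M - ln c) sequentially"
      proof (rule eventually_mono[OF ev])
        fix n assume n: "\<forall>a\<in>F. cmod (ph a) < r n"
        note JS = jensen_seq[OF holoG G0nz r(1)[of n] r(2)[of n] r(3)[of _ n] GM]
        have sub: "ph ` F \<subseteq> Zn G (r n)" using n Gph by (auto simp: Zn_def)
        have "(\<Sum>a\<in>F. m a * ln (r n / cmod (ph a))) = (\<Sum>a\<in>F. real (nat (zorder G (ph a))) * ln (r n / cmod (ph a)))"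
          by (rule sum.cong) (auto simp: m_def zero_mult_def zt)
        also have "\<dots> = (\<Sum>b\<in>ph ` F. real (nat (zorder G b)) * ln (r n / cmod b))"
          by (simp add: sum.reindex[OF inj])
        also have "\<dots> \<le> Sn G (r n)" unfolding Sn_def
          by (rule sum_mono2[OF JS(1) sub]) (use JS(5) in auto)
        also have "\<dots> \<le> ln M - ln (cmod (G 0))" using JS(4) by simp
        also have "\<dots> \<le> ln M - ln c" using lnc by simp
        finally show "(\<Sum>a\<in>F. m a * ln (r n / cmod (ph a))) \<le> ln M - ln c" .
      qed
      have lim: "(\<lambda>n. \<Sum>a\<in>F. m a * ln (r n / cmod (ph a))) \<longlonglongrightarrow> (\<Sum>a\<in>F. m a * ln (1 / cmod (ph a)))"
        by (intro tendsto_intros r(4)) (use phl in auto)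
      have S1: "(\<Sum>a\<in>F. m a * ln (1 / cmod (ph a))) \<le> ln M - ln c"
        by (rule tendsto_upperbound[OF lim evle]) simp
      have "(\<Sum>a\<in>F. m a * Re a) \<le> (\<Sum>a\<in>F. m a * (K * ln (1 / cmod (ph a))))"
      proof (rule sum_mono)
        fix a assume a: "a \<in> F"
        have p: "0 < cmod (ph a)" using phl[OF a] by simp
        have "Re a * (2 * \<gamma> / (4 * \<gamma>\<^sup>2 + 1)) \<le> ln (1 / cmod (ph a))"
          using phl[OF a] p by (simp add: ln_div)
        hence "K * (Re a * (2 * \<gamma> / (4 * \<gamma>\<^sup>2 + 1))) \<le> K * ln (1 / cmod (ph a))"
          using Kpos by (intro mult_left_mono) auto
        moreover have "K * (Re a * (2 * \<gamma> / (4 * \<gamma>\<^sup>2 + 1))) = Re a"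
        proof -
          have "0 < 4 * \<gamma>\<^sup>2 + 1" using zero_le_power2[of \<gamma>] by linarith
          hence D: "4 * \<gamma>\<^sup>2 + 1 \<noteq> 0" "2 * \<gamma> \<noteq> 0" using gamma_pos by auto
          have kx: "K * (2 * \<gamma> / (4 * \<gamma>\<^sup>2 + 1)) = 1" unfolding K_def using D by simp
          show ?thesis by (metis kx mult.left_commute mult.right_neutral)
        qed
        ultimately have "Re a \<le> K * ln (1 / cmod (ph a))" by simp
        thus "m a * Re a \<le> m a * (K * ln (1 / cmod (ph a)))" by (intro mult_left_mono) (auto simp: m_def)
      qed
      also have "\<dots> = K * (\<Sum>a\<in>F. m a * ln (1 / cmod (ph a)))"
        by (simp add: sum_distrib_left mult_ac)
      also have "\<dots> \<le> K * (ln M - ln c)" using S1 Kpos by (intro mult_left_mono) auto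
      also have "ln M - ln c = ln (M / c)" using Mpos c_pos by (simp add: ln_div)
      finally show ?thesis .
    qed
    have nn: "0 \<le> m s * Re s" if "s \<in> Z" for s using that by (simp add: m_def Z_def)
    have sm: "(\<lambda>s. m s * Re s) summable_on Z"
      by (rule nonneg_bdd_above_summable_on[OF nn]) (use fb in \<open>auto intro!: bdd_aboveI2\<close>)
    have "(\<Sum>\<^sub>\<infinity>s\<in>Z. m s * Re s) \<le> K * ln (M / c)"
      by (rule infsum_le_finite_sums[OF sm fb])
    with sm show "let Z = {s. f s = 0 \<and> \<tau> \<le> Im s \<and> Im s \<le> \<tau> + 1 \<and> 0 < Re s \<and> Re s < \<gamma>} in
        (\<lambda>s. real (zero_mult f s) * Re s) summable_on Z \<and>
        (\<Sum>\<^sub>\<infinity>s\<in>Z. real (zero_mult f s) * Re s)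
          \<le> (4 * \<gamma>\<^sup>2 + 1) / (2 * \<gamma>) * ln (sup_norm_rhp f / c)"
      by (simp add: Let_def Z_def[symmetric] m_def K_def M_def)
  next
    show "(\<integral>\<^sup>+ t\<in>{\<tau>..\<tau>+1}. ennreal \<bar>ln (cmod (g t))\<bar> \<partial>lborel)
        \<le> ennreal (\<bar>ln (sup_norm_rhp f)\<bar>
            + pi / 2 * ((4 * \<gamma>\<^sup>2 + 1) / (2 * \<gamma>)) * ln (sup_norm_rhp f / c))"
    proof -
      define u where "u n x = ln M - ln (cmod (G (of_real (r n) * ec x)))" for n x
      have cG: "continuous_on (ball 0 1) G" by (rule holomorphic_on_imp_continuous_on[OF holoG])
      have um[measurable]: "u n \<in> borel_measurable borel" for n
      proof -
        have c1: "continuous_on UNIV (\<lambda>x. of_real (r n) * ec x)" unfolding ec_def by (intro continuous_intros)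
        have sub: "(\<lambda>x. of_real (r n) * ec x) ` UNIV \<subseteq> ball 0 1" using r(1)[of n] r(2)[of n] by (auto simp: norm_mult)
        have c2: "continuous_on UNIV (\<lambda>x. G (of_real (r n) * ec x))" by (rule continuous_on_compose2[OF cG c1 sub])
        have nz: "cmod (G (of_real (r n) * ec x)) \<noteq> 0" for x using r(3)[of "of_real (r n) * ec x" n] r(1)[of n] by (simp add: norm_mult)
        have "continuous_on UNIV (u n)" unfolding u_def by (intro continuous_intros c2) (use nz in blast)
        thus ?thesis by (rule borel_measurable_continuous_onI)
      qed
      have unn: "0 \<le> u n x" for n x
        using jensen_seq(6)[OF holoG G0nz r(1)[of n] r(2)[of n] r(3)[of _ n] GM, of x] by (simp add: u_def)
      have uint: "(u n has_integral (ln M - (ln (cmod (G 0)) + Sn G (r n)))) {0..1}" for n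
      proof -
        have c: "((\<lambda>x. ln M) has_integral ln M) {0..1::real}" using has_integral_const_real[of "ln M" 0 1] by simp
        show ?thesis unfolding u_def[abs_def]
          by (rule has_integral_diff[OF c jensen_seq(2)[OF holoG G0nz r(1)[of n] r(2)[of n] r(3)[of _ n] GM]])
      qed
      have ubd: "ln M - (ln (cmod (G 0)) + Sn G (r n)) \<le> ln M - ln c" for n
        using jensen_seq(3)[OF holoG G0nz r(1)[of n] r(2)[of n] r(3)[of _ n] GM] lnc by simp
      define Hf where "Hf x = liminf (\<lambda>n. ennreal (u n x))" for x
      have Hm: "Hf \<in> borel_measurable borel" unfolding Hf_def by measurable
      have FC: "(\<integral>\<^sup>+x. Hf x * indicator {0..1} x \<partial>lborel) \<le> ennreal (ln M - ln c)"
        unfolding Hf_def by (rule fatou_circle[OF um unn uint ubd])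
      define K' where "K' = pi * (4 * \<gamma>\<^sup>2 + 1) / (4 * \<gamma>)"
      have pw: "AE t in lborel. t \<in> {\<tau>..\<tau>+1} \<longrightarrow>
        ennreal \<bar>ln (cmod (g t))\<bar> \<le> ennreal \<bar>ln M\<bar> + ennreal K' * (Hf (gg \<gamma> (\<tau> + 1/2 - t)) * ennreal (ggd \<gamma> (\<tau> + 1/2 - t)))"
      proof (rule eventually_mono[OF bv], intro impI)
        fix t assume nt: "nontangential_limit f t (g t)" and tI: "t \<in> {\<tau>..\<tau>+1}"
        define v where "v = \<tau> + 1/2 - t"
        have v: "\<bar>v\<bar> \<le> 1/2" using tI unfolding v_def abs_le_iff by auto
        define x where "x = gg \<gamma> v"
        define w0 where "w0 = ec x"
        have pb: "psi \<gamma> t0 w0 = \<i> * of_real t" and w01: "w0 \<noteq> 1"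
          using psi_boundary(1)[OF gamma_pos, of t0 v] psi_boundary(2)[OF gamma_pos, of v] by (simp_all add: w0_def x_def t0_def v_def)
        have nw0: "cmod w0 = 1" by (simp add: w0_def)
        note rc = radial_cone(2)[OF gamma_pos nw0 w01 r(1) r(2) r(4), of t0]
        have rc': "filterlim (\<lambda>n. psi \<gamma> t0 (of_real (r n) * w0)) (at (\<i> * of_real t) within {z. 0 < Re z \<and> \<bar>Im z - t\<bar> < 2 * Re z}) sequentially"
          using rc unfolding pb by simp
        have nt': "(f \<longlongrightarrow> g t) (at (\<i> * of_real t) within {z. 0 < Re z \<and> \<bar>Im z - t\<bar> < 2 * Re z})"
          using nt unfolding nontangential_limit_def by auto
        have limf: "(\<lambda>n. f (psi \<gamma> t0 (of_real (r n) * w0))) \<longlonglongrightarrow> g t"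
          by (rule filterlim_compose[OF nt' rc'])
        have Geq: "G (of_real (r n) * ec x) = f (psi \<gamma> t0 (of_real (r n) * w0))" for n
          by (simp add: G_def w0_def)
        show "ennreal \<bar>ln (cmod (g t))\<bar> \<le> ennreal \<bar>ln M\<bar> + ennreal K' * (Hf (gg \<gamma> (\<tau> + 1/2 - t)) * ennreal (ggd \<gamma> (\<tau> + 1/2 - t)))"
        proof (cases "g t = 0")
          case True
          thus ?thesis by simp
        next
          case False
          have gpos: "0 < cmod (g t)" using False by simp
          have fM: "cmod (f (psi \<gamma> t0 (of_real (r n) * w0))) \<le> M" for n
            using GM[of "of_real (r n) * w0"] r(1)[of n] r(2)[of n] nw0 by (simp add: G_def norm_mult)
          have gM: "cmod (g t) \<le> M"
            by (rule tendsto_upperbound[OF tendsto_norm[OF limf]]) (auto intro!: always_eventually fM)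
          have limu: "(\<lambda>n. u n x) \<longlonglongrightarrow> ln M - ln (cmod (g t))"
            unfolding u_def Geq by (intro tendsto_intros limf) (use False in simp)
          have Hfx: "Hf x = ennreal (ln M - ln (cmod (g t)))"
            unfolding Hf_def by (rule lim_imp_Liminf) (auto intro: tendsto_ennrealI[OF limu])
          define D where "D = ln M - ln (cmod (g t))"
          have D: "0 \<le> D" using gM gpos Mpos by (simp add: D_def)
          define q where "q = ggd \<gamma> v"
          have q: "0 \<le> q" using gamma_pos by (simp add: q_def ggd_def add_pos_nonneg less_imp_le)
          have K': "0 \<le> K'" using gamma_pos by (simp add: K'_def)
          have Kq: "1 \<le> K' * q"
          proof -
            have v2: "v\<^sup>2 \<le> 1/4"
            proof -
              have "v\<^sup>2 = \<bar>v\<bar>\<^sup>2" by simp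
              also have "\<dots> \<le> (1/2)\<^sup>2" by (rule power_mono[OF v]) simp
              finally show ?thesis by (simp add: power2_eq_square)
            qed
            have pos: "0 < \<gamma>\<^sup>2 + v\<^sup>2" using gamma_pos by (simp add: add_pos_nonneg)
            have "K' * q = (4 * \<gamma>\<^sup>2 + 1) / (4 * (\<gamma>\<^sup>2 + v\<^sup>2))"
            proof -
              define S where "S = \<gamma>\<^sup>2 + v\<^sup>2"
              define A where "A = 4 * \<gamma>\<^sup>2 + 1"
              have S: "S \<noteq> 0" using pos unfolding S_def by linarith
              have "K' * q = pi * A / (4 * \<gamma>) * (\<gamma> / (pi * S))"
                by (simp add: K'_def q_def ggd_def S_def A_def)
              also have "\<dots> = A / (4 * S)" using S gamma_pos by (simp add: field_simps)
              finally show ?thesis by (simp add: S_def A_def)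
            qed
            also have "1 \<le> (4 * \<gamma>\<^sup>2 + 1) / (4 * (\<gamma>\<^sup>2 + v\<^sup>2))" using pos v2 by (simp add: field_simps)
            finally show ?thesis .
          qed
          have real_ineq: "\<bar>ln (cmod (g t))\<bar> \<le> \<bar>ln M\<bar> + K' * (D * q)"
          proof -
            have "\<bar>ln (cmod (g t))\<bar> \<le> \<bar>ln M\<bar> + D" using D unfolding D_def by (smt (verit))
            also have "D \<le> K' * (D * q)" using Kq D by (metis mult.left_commute mult_left_mono mult.right_neutral mult.commute)
            finally show ?thesis by simp
          qed
          have "ennreal \<bar>ln (cmod (g t))\<bar> \<le> ennreal (\<bar>ln M\<bar> + K' * (D * q))"
            by (rule ennreal_leI[OF real_ineq])
          also have "\<dots> = ennreal \<bar>ln M\<bar> + ennreal K' * (ennreal D * ennreal q)"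
            using D q K' by (simp add: ennreal_plus ennreal_mult)
          finally have fin: "ennreal \<bar>ln (cmod (g t))\<bar> \<le> ennreal \<bar>ln M\<bar> + ennreal K' * (ennreal D * ennreal q)" .
          have Hfx': "Hf (gg \<gamma> (\<tau> + 1/2 - t)) = ennreal D" using Hfx by (simp add: x_def v_def D_def)
          show ?thesis unfolding Hfx' using fin by (simp add: q_def v_def)
        qed
      qed
      have "(\<integral>\<^sup>+ t\<in>{\<tau>..\<tau>+1}. ennreal \<bar>ln (cmod (g t))\<bar> \<partial>lborel) \<le> ennreal (\<bar>ln M\<bar> + pi * (4 * \<gamma>\<^sup>2 + 1) / (4 * \<gamma>) * (ln M - ln c))"
        by (rule final_bound[OF gamma_pos _ _ Hm FC]) (use cM c_pos pw in \<open>auto simp: K'_def\<close>)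
      also have "\<bar>ln M\<bar> + pi * (4 * \<gamma>\<^sup>2 + 1) / (4 * \<gamma>) * (ln M - ln c) = \<bar>ln M\<bar> + pi / 2 * ((4 * \<gamma>\<^sup>2 + 1) / (2 * \<gamma>)) * ln (M / c)"
        using Mpos c_pos gamma_pos by (simp add: ln_div field_simps)
      finally show ?thesis by (simp add: M_def)
    qed
  qed
qed


end
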